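(* Let $I\subset[0,1]$ be a set satisfying the DCC and let $J_0\subset[0,1]$ be a finite set. Then the set $I_0=\{c\in I\mid \frac{m-1+f+kc}{m}\in J_0\text{ for some }k,m\in\mathbb{N}\text{ and }f\in D(I)\}$ is finite.
   Context: $\mathbb{N}$ denotes positive integers. $I_+=\{0\}\cup\{j\in[0,1]\mid j=\sum_{p=1}^l i_p,\ i_p\in I\}$ and $D(I)=\{a\le1\mid a=\frac{m-1+f}{m},\ m\in\mathbb{N},\ f\in I_+\}$. DCC: no infinite strictly decreasing sequence. *)

theory Defs
  imports Complex_Main
begin

definition dcc :: "real set \<Rightarrow> bool" where
  "dcc I \<longleftrightarrow> \<not> (\<exists>s :: nat \<Rightarrow> real. (\<forall>n. s n \<in> I) \<and> (\<forall>n. s (Suc n) < s n))"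

definition plus_set :: "real set \<Rightarrow> real set" where
  "plus_set I = {0} \<union> {j. 0 \<le> j \<and> j \<le> 1 \<and>
      (\<exists>xs. xs \<noteq> [] \<and> set xs \<subseteq> I \<and> j = sum_list xs)}"

definition D_set :: "real set \<Rightarrow> real set" where
  "D_set I = {a. a \<le> 1 \<and> (\<exists>(m::nat) f. m \<ge> 1 \<and> f \<in> plus_set I \<and>
      a = (real m - 1 + f) / real m)}"

end

theory Submission imports Defs begin

definition good :: "'a::linorder set \<Rightarrow> bool" where
  "good A \<longleftrightarrow> (\<forall>s::nat\<Rightarrow>'a. (\<forall>n. s n \<in> A) \<longrightarrow> (\<exists>r::nat\<Rightarrow>nat. strict_mono r \<and> incseq (\<lambda>n. s (r n))))"

definition dccp :: "'a::linorder set \<Rightarrow> bool" where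
  "dccp A \<longleftrightarrow> \<not>(\<exists>s::nat\<Rightarrow>'a. (\<forall>n. s n \<in> A) \<and> (\<forall>n. s (Suc n) < s n))"

lemma dccp_good:
  fixes A :: "'a::linorder set"
  assumes "dccp A" shows "good A"
  unfolding good_def
proof (intro allI impI)
  fix s :: "nat \<Rightarrow> 'a" assume s: "\<forall>n. s n \<in> A"
  obtain r where r: "strict_mono r" "monoseq (\<lambda>n. s (r n))" using seq_monosub by blast
  define t where "t = (\<lambda>n. s (r n))"
  show "\<exists>r. strict_mono r \<and> incseq (\<lambda>n. s (r n))"
  proof (cases "incseq t")
    case True then show ?thesis using r t_def by blast
  next
    case False
    then have dec: "decseq t" using r(2) unfolding t_def monoseq_iff by auto
    have "\<exists>N. \<forall>n\<ge>N. t n = t N"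
    proof (rule ccontr)
      assume "\<not> ?thesis"
      then have H: "\<forall>N. \<exists>n\<ge>N. t n < t N"
        using dec by (metis decseq_def order_less_le)
      have "\<exists>g. \<forall>n. True \<and> t (g (Suc n)) < t (g n)"
        by (rule dependent_nat_choice) (use H in auto)
      then obtain g where g: "\<And>n. t (g (Suc n)) < t (g n)" by blast
      have "\<exists>s. (\<forall>n. s n \<in> A) \<and> (\<forall>n. s (Suc n) < s n)"
        by (rule exI[of _ "\<lambda>n. t (g n)"]) (use g s t_def in auto)
      then show False using assms unfolding dccp_def by blast
    qed
    then obtain N where N: "\<And>n. n \<ge> N \<Longrightarrow> t n = t N" by blast
    have "strict_mono (\<lambda>n. r (n + N))" using r(1) unfolding strict_mono_def by auto
    moreover have "incseq (\<lambda>n. s (r (n + N)))"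
      unfolding incseq_def using N t_def by (metis le_add2 order_refl)
    ultimately show ?thesis by blast
  qed
qed

lemma finite_dccp:
  fixes A :: "'a::linorder set"
  assumes "finite A" shows "dccp A"
  unfolding dccp_def
proof
  assume "\<exists>s. (\<forall>n. s n \<in> A) \<and> (\<forall>n. s (Suc n) < s n)"
  then obtain s where s: "\<forall>n. s n \<in> A" "\<forall>n. s (Suc n) < s n" by blast
  have "\<And>m n. m < n \<Longrightarrow> s n < s m"
  proof -
    fix m n :: nat assume "m < n"
    then show "s n < s m"
      by (induction n) (use s(2) less_Suc_eq in \<open>auto intro: less_trans\<close>)
  qed
  then have "inj s" unfolding inj_def by (metis linorder_neqE_nat order_less_irrefl)
  then have "infinite (range s)" using finite_imageD by auto
  moreover have "range s \<subseteq> A" using s by auto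
  ultimately show False using assms finite_subset by blast
qed

lemma nat_dccp: "dccp (A :: nat set)"
  unfolding dccp_def
proof
  assume "\<exists>s. (\<forall>n. s n \<in> A) \<and> (\<forall>n. s (Suc n) < s n)"
  then obtain s :: "nat \<Rightarrow> nat" where s: "\<forall>n. s (Suc n) < s n" by blast
  have "\<And>n. s n + n \<le> s 0"
  proof -
    fix n show "s n + n \<le> s 0" proof (induction n)
      case (Suc n) then show ?case using s[rule_format, of n] by linarith
    qed simp
  qed
  from this[of "Suc (s 0)"] show False by simp
qed

lemma good_subset: "good B \<Longrightarrow> A \<subseteq> B \<Longrightarrow> good A"
  unfolding good_def by blast

lemma incseq_comp: "incseq (\<lambda>n. g (r n)) \<Longrightarrow> strict_mono q \<Longrightarrow> incseq (\<lambda>n. g (r (q n)))"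
  unfolding incseq_def by (meson strict_mono_less_eq)

lemma good_sub:
  fixes r :: "nat \<Rightarrow> nat"
  assumes "good A" "\<And>n. s (r n) \<in> A"
  shows "\<exists>q. strict_mono q \<and> incseq (\<lambda>n. s (r (q n)))"
  using assms(1)[unfolded good_def, rule_format, of "\<lambda>n. s (r n)"] assms(2) by auto

lemma strict_mono_comp: "strict_mono r \<Longrightarrow> strict_mono q \<Longrightarrow> strict_mono (\<lambda>n. r (q n))"
  unfolding strict_mono_def by auto

lemma good_plus:
  fixes A B :: "real set"
  assumes "good A" "good B"
  shows "good {a + b | a b. a \<in> A \<and> b \<in> B}"
  unfolding good_def
proof (intro allI impI)
  fix s :: "nat \<Rightarrow> real" assume "\<forall>n. s n \<in> {a + b | a b. a \<in> A \<and> b \<in> B}"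
  then have "\<forall>n. \<exists>a b. s n = a + b \<and> a \<in> A \<and> b \<in> B" by blast
  then obtain a b where ab: "\<And>n. s n = a n + b n \<and> a n \<in> A \<and> b n \<in> B" by metis
  obtain r1 where r1: "strict_mono r1" "incseq (\<lambda>n. a (r1 n))"
    using good_sub[of A a id] assms ab by auto
  obtain r2 where r2: "strict_mono r2" "incseq (\<lambda>n. b (r1 (r2 n)))"
    using good_sub[of B b r1] assms ab by auto
  have "incseq (\<lambda>n. a (r1 (r2 n)))" using incseq_comp r1 r2 by blast
  then have "incseq (\<lambda>n. s (r1 (r2 n)))" using r2(2) ab unfolding incseq_def
    by (simp add: add_mono)
  then show "\<exists>r. strict_mono r \<and> incseq (\<lambda>n. s (r n))"
    using strict_mono_comp r1 r2 by blast
qed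

fun ksums :: "real set \<Rightarrow> nat \<Rightarrow> real set" where
  "ksums A 0 = {0}"
| "ksums A (Suc n) = {a + b | a b. a \<in> A \<and> b \<in> ksums A n}"

lemma good_sums: "good A \<Longrightarrow> good (ksums A n)"
  by (induction n) (auto intro: good_plus dccp_good finite_dccp)

lemma sum_list_in_sums: "length xs = n \<Longrightarrow> set xs \<subseteq> A \<Longrightarrow> sum_list xs \<in> ksums A n"
  by (induction xs arbitrary: n) force+

lemma dccp_min:
  fixes A :: "'a::linorder set"
  assumes "dccp A" "A \<noteq> {}" shows "\<exists>e\<in>A. \<forall>y\<in>A. e \<le> y"
proof (rule ccontr)
  assume "\<not> ?thesis"
  then have H: "\<forall>x\<in>A. \<exists>y\<in>A. y < x" by (meson not_le)
  have "\<exists>g. \<forall>n. g n \<in> A \<and> g (Suc n) < g n"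
    by (rule dependent_nat_choice) (use H assms(2) in auto)
  then show False using assms(1) unfolding dccp_def by blast
qed

lemma sum_list_lower: "\<forall>x\<in>set ys. e \<le> x \<Longrightarrow> real (length ys) * e \<le> sum_list ys"
  by (induction ys) (auto simp: algebra_simps)

lemma dccp_I0:
  assumes "I \<subseteq> {0..1}" "dcc I" shows "dccp (I \<union> {0})"
  unfolding dccp_def
proof
  assume "\<exists>s::nat\<Rightarrow>real. (\<forall>n. s n \<in> I \<union> {0}) \<and> (\<forall>n. s (Suc n) < s n)"
  then obtain s :: "nat \<Rightarrow> real" where s: "\<forall>n. s n \<in> I \<union> {0}" "\<forall>n. s (Suc n) < s n" by blast
  have nn: "\<And>n. s n \<ge> 0" using s(1) assms(1) by fastforce
  have "\<And>n. s n \<in> I"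
  proof -
    fix n have "s n > 0" using nn[of "Suc n"] s(2) by (meson le_less_trans)
    then show "s n \<in> I" using s(1) by (metis Un_iff less_irrefl singletonD)
  qed
  then show False using s(2) assms(2) unfolding dcc_def by blast
qed

lemma plus_set_sums:
  assumes "I \<subseteq> {0..1}" "dcc I" shows "\<exists>L. plus_set I \<subseteq> ksums (I \<union> {0}) L"
proof (cases "I - {0} = {}")
  case True
  have "plus_set I \<subseteq> ksums (I \<union> {0}) 0"
  proof
    fix j assume "j \<in> plus_set I"
    then consider "j = 0" | xs where "set xs \<subseteq> I" "j = sum_list xs" unfolding plus_set_def by blast
    then show "j \<in> ksums (I \<union> {0}) 0"
    proof cases
      case 2
      then have "set xs \<subseteq> {0}" using True by blast
      then have "sum_list xs = 0" by (induction xs) auto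
      then show ?thesis using 2 by simp
    qed simp
  qed
  then show ?thesis by blast
next
  case False
  have "dccp (I - {0})" using dccp_I0[OF assms] unfolding dccp_def by blast
  then obtain e where e: "e \<in> I - {0}" "\<forall>y\<in>I - {0}. e \<le> y" using dccp_min False by blast
  have epos: "e > 0" using e(1) assms(1) by force
  define L where "L = nat \<lceil>1 / e\<rceil>"
  have "plus_set I \<subseteq> ksums (I \<union> {0}) L"
  proof
    fix j assume "j \<in> plus_set I"
    then consider "j = 0" | xs where "set xs \<subseteq> I" "j = sum_list xs" "j \<le> 1" unfolding plus_set_def by blast
    then show "j \<in> ksums (I \<union> {0}) L"
    proof cases
      case 1
      have "sum_list (replicate L (0::real)) \<in> ksums (I \<union> {0}) L"
        by (rule sum_list_in_sums) auto
      then show ?thesis using 1 by (simp add: sum_list_replicate del: replicate.simps)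
    next
      case 2
      define ys where "ys = filter (\<lambda>x. x \<noteq> 0) xs"
      have sy: "sum_list ys = j" unfolding ys_def using 2(2)
        by (induction xs arbitrary: j) auto
      have "\<forall>x\<in>set ys. e \<le> x" using e(2) 2(1) unfolding ys_def by auto
      then have "real (length ys) * e \<le> 1" using sum_list_lower sy 2(3) by fastforce
      then have "real (length ys) \<le> 1 / e" using epos by (simp add: field_simps)
      then have len: "length ys \<le> L" unfolding L_def by linarith
      define zs where "zs = ys @ replicate (L - length ys) 0"
      have "sum_list zs \<in> ksums (I \<union> {0}) L"
        by (rule sum_list_in_sums) (use len 2(1) in \<open>auto simp: zs_def ys_def\<close>)
      then show ?thesis using sy by (simp add: zs_def sum_list_replicate del: replicate.simps)
    qed
  qed
  then show ?thesis by blast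
qed

lemma good_plus_set:
  assumes "I \<subseteq> {0..1}" "dcc I" shows "good (plus_set I)"
proof -
  obtain L where "plus_set I \<subseteq> ksums (I \<union> {0}) L" using plus_set_sums[OF assms] by blast
  moreover have "good (ksums (I \<union> {0}) L)" by (rule good_sums, rule dccp_good, rule dccp_I0[OF assms])
  ultimately show ?thesis using good_subset by blast
qed

lemma D_mono:
  fixes m m' f f' :: real
  assumes "1 \<le> m" "m \<le> m'" "f \<le> f'" "f' \<le> 1"
  shows "(m - 1 + f) / m \<le> (m' - 1 + f') / m'"
proof -
  have "(1 - f') / m' \<le> (1 - f) / m"
    by (rule frac_le) (use assms in auto)
  moreover have "(m - 1 + f) / m = 1 - (1 - f) / m" using assms by (simp add: field_simps)
  moreover have "(m' - 1 + f') / m' = 1 - (1 - f') / m'" using assms by (simp add: field_simps)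
  ultimately show ?thesis by linarith
qed

lemma good_step:
  fixes r :: "nat \<Rightarrow> nat"
  assumes "good A" "\<And>n. s n \<in> A" "strict_mono r"
  shows "\<exists>r'. strict_mono r' \<and> incseq (\<lambda>n. s (r' n)) \<and>
    (\<forall>g :: nat \<Rightarrow> real. incseq (\<lambda>n. g (r n)) \<longrightarrow> incseq (\<lambda>n. g (r' n)))"
proof -
  obtain q where q: "strict_mono q" "incseq (\<lambda>n. s (r (q n)))" using good_sub[of A s r] assms by auto
  show ?thesis
    by (rule exI[of _ "\<lambda>n. r (q n)"]) (use q assms(3) strict_mono_comp incseq_comp in blast)
qed

lemma good_D:
  assumes "I \<subseteq> {0..1}" "dcc I" shows "good (D_set I)"
  unfolding good_def
proof (intro allI impI)
  fix s :: "nat \<Rightarrow> real" assume "\<forall>n. s n \<in> D_set I"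
  then have "\<forall>n. \<exists>(m::nat) f. m \<ge> 1 \<and> f \<in> plus_set I \<and> s n = (real m - 1 + f) / real m"
    unfolding D_set_def by blast
  then obtain m f where mf: "\<And>n. m n \<ge> (1::nat) \<and> f n \<in> plus_set I \<and> s n = (real (m n) - 1 + f n) / real (m n)"
    by metis
  have f1: "\<And>n. f n \<le> 1"
  proof -
    fix n have "f n \<in> plus_set I" using mf by blast
    then show "f n \<le> 1" unfolding plus_set_def by auto
  qed
  obtain r1 where r1: "strict_mono r1" "incseq (\<lambda>n. f (r1 n))"
    using good_sub[of "plus_set I" f id] good_plus_set[OF assms] mf by auto
  obtain r2 where r2: "strict_mono r2" "incseq (\<lambda>n. m (r1 (r2 n)))"
    using good_sub[of UNIV m r1] dccp_good[OF nat_dccp] by auto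
  have "incseq (\<lambda>n. f (r1 (r2 n)))" using incseq_comp r1 r2 by blast
  then have "incseq (\<lambda>n. s (r1 (r2 n)))" using r2(2) unfolding incseq_def
    using mf f1 D_mono by (metis of_nat_1 of_nat_le_iff)
  then show "\<exists>r. strict_mono r \<and> incseq (\<lambda>n. s (r n))"
    using strict_mono_comp r1 r2 by blast
qed

lemma final_arith:
  fixes mx my kx ky fx fy cx cy jx jy :: real
  assumes "1 \<le> mx" "mx \<le> my" "1 \<le> kx" "kx \<le> ky" "fx \<le> fy" "0 \<le> cx" "cx < cy"
    "jy \<le> jx" "jx \<le> 1" "jx * mx = mx - 1 + fx + kx * cx" "jy * my = my - 1 + fy + ky * cy"
  shows False
proof -
  have a: "kx * cy \<le> ky * cy" using assms by (intro mult_right_mono) auto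
  have b: "kx * cx < kx * cy" using assms by (intro mult_strict_left_mono) auto
  have c: "my * (jy - 1) \<le> mx * (jy - 1)" using assms by (intro mult_right_mono_neg) auto
  have d: "mx * (jy - 1) \<le> mx * (jx - 1)" using assms by (intro mult_left_mono) auto
  show False using a b c d assms(5,10,11) by (simp add: algebra_simps)
qed

theorem lemma5p2:
  fixes I J0 :: "real set"
  assumes "I \<subseteq> {0..1}" and "dcc I"
    and "J0 \<subseteq> {0..1}" and "finite J0"
  shows "finite {c \<in> I. \<exists>(k::nat) (m::nat) f. k \<ge> 1 \<and> m \<ge> 1 \<and> f \<in> D_set I \<and>
            (real m - 1 + f + real k * c) / real m \<in> J0}"
    (is "finite ?T")
proof (rule ccontr)
  assume "infinite ?T"
  then obtain c :: "nat \<Rightarrow> real" where c: "inj c" "range c \<subseteq> ?T"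
    using infinite_countable_subset[OF \<open>infinite ?T\<close>] by blast
  have cT: "c n \<in> ?T" for n using subsetD[OF c(2) rangeI] .
  then have "\<forall>n. \<exists>(k::nat) (m::nat) f. k \<ge> 1 \<and> m \<ge> 1 \<and> f \<in> D_set I \<and>
            (real m - 1 + f + real k * c n) / real m \<in> J0" by simp
  then have "\<exists>k. \<forall>n. \<exists>(m::nat) f. k n \<ge> (1::nat) \<and> m \<ge> 1 \<and> f \<in> D_set I \<and>
            (real m - 1 + f + real (k n) * c n) / real m \<in> J0" by (rule choice)
  then obtain k where "\<forall>n. \<exists>(m::nat) f. k n \<ge> (1::nat) \<and> m \<ge> 1 \<and> f \<in> D_set I \<and>
            (real m - 1 + f + real (k n) * c n) / real m \<in> J0" by blast
  then have "\<exists>m. \<forall>n. \<exists>f. k n \<ge> (1::nat) \<and> m n \<ge> (1::nat) \<and> f \<in> D_set I \<and>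
            (real (m n) - 1 + f + real (k n) * c n) / real (m n) \<in> J0" by (rule choice)
  then obtain m where "\<forall>n. \<exists>f. k n \<ge> (1::nat) \<and> m n \<ge> (1::nat) \<and> f \<in> D_set I \<and>
            (real (m n) - 1 + f + real (k n) * c n) / real (m n) \<in> J0" by blast
  then have "\<exists>f. \<forall>n. k n \<ge> (1::nat) \<and> m n \<ge> (1::nat) \<and> f n \<in> D_set I \<and>
            (real (m n) - 1 + f n + real (k n) * c n) / real (m n) \<in> J0" by (rule choice)
  then obtain f where kmf: "\<And>n. k n \<ge> (1::nat) \<and> m n \<ge> (1::nat) \<and> f n \<in> D_set I \<and>
            (real (m n) - 1 + f n + real (k n) * c n) / real (m n) \<in> J0" by blast
  define j where "j n = (real (m n) - 1 + f n + real (k n) * c n) / real (m n)" for n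
  have cI: "\<And>n. c n \<in> I" using cT by simp
  have jJ0: "\<And>n. j n \<in> J0" using kmf unfolding j_def by blast
  have jJ: "\<And>n. - j n \<in> uminus ` J0" using jJ0 by blast
  have gI: "good I" proof -
    have "dccp I" using assms(2) unfolding dcc_def dccp_def .
    then show ?thesis by (rule dccp_good)
  qed
  have gJ: "good (uminus ` J0)" by (rule dccp_good[OF finite_dccp[OF finite_imageI[OF assms(4)]]])
  have gN: "good (UNIV :: nat set)" by (rule dccp_good[OF nat_dccp])
  have gD: "good (D_set I)" by (rule good_D[OF assms(1,2)])
  have smid: "strict_mono (id :: nat \<Rightarrow> nat)" by (simp add: strict_mono_def)
  obtain r1 where r1: "strict_mono r1" "incseq (\<lambda>n. c (r1 n))"
    using good_step[of I c id, OF gI cI smid] by blast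
  obtain r2 where r2: "strict_mono r2" "incseq (\<lambda>n. - j (r2 n))"
      "\<forall>g :: nat \<Rightarrow> real. incseq (\<lambda>n. g (r1 n)) \<longrightarrow> incseq (\<lambda>n. g (r2 n))"
    using good_step[of "uminus ` J0" "\<lambda>n. - j n" r1, OF gJ jJ r1(1)] by blast
  obtain r3 where r3: "strict_mono r3" "incseq (\<lambda>n. k (r3 n))"
      "\<forall>g :: nat \<Rightarrow> real. incseq (\<lambda>n. g (r2 n)) \<longrightarrow> incseq (\<lambda>n. g (r3 n))"
  proof -
    obtain q where q: "strict_mono q" "incseq (\<lambda>n. k (r2 (q n)))" using good_sub[OF gN, of k r2] by auto
    show ?thesis
    proof (rule that[of "\<lambda>n. r2 (q n)"])
      show "strict_mono (\<lambda>n. r2 (q n))" using strict_mono_comp[OF r2(1) q(1)] .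
      show "incseq (\<lambda>n. k (r2 (q n)))" using q(2) .
      show "\<forall>g :: nat \<Rightarrow> real. incseq (\<lambda>n. g (r2 n)) \<longrightarrow> incseq (\<lambda>n. g (r2 (q n)))"
        using incseq_comp[OF _ q(1)] by blast
    qed
  qed
  obtain r4 where r4: "strict_mono r4" "incseq (\<lambda>n. m (r4 n))"
      "\<forall>g :: nat \<Rightarrow> real. incseq (\<lambda>n. g (r3 n)) \<longrightarrow> incseq (\<lambda>n. g (r4 n))"
      "incseq (\<lambda>n. k (r4 n))"
  proof -
    obtain q where q: "strict_mono q" "incseq (\<lambda>n. m (r3 (q n)))" using good_sub[OF gN, of m r3] by auto
    show ?thesis
    proof (rule that[of "\<lambda>n. r3 (q n)"])
      show "strict_mono (\<lambda>n. r3 (q n))" using strict_mono_comp[OF r3(1) q(1)] .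
      show "incseq (\<lambda>n. m (r3 (q n)))" using q(2) .
      show "\<forall>g :: nat \<Rightarrow> real. incseq (\<lambda>n. g (r3 n)) \<longrightarrow> incseq (\<lambda>n. g (r3 (q n)))"
        using incseq_comp[OF _ q(1)] by blast
      show "incseq (\<lambda>n. k (r3 (q n)))" using incseq_comp[of k r3 q, OF r3(2) q(1)] .
    qed
  qed
  have fD: "\<And>n. f n \<in> D_set I" using kmf by blast
  obtain r5 where r5: "strict_mono r5" "incseq (\<lambda>n. f (r5 n))"
      "\<forall>g :: nat \<Rightarrow> real. incseq (\<lambda>n. g (r4 n)) \<longrightarrow> incseq (\<lambda>n. g (r5 n))"
      "incseq (\<lambda>n. k (r5 n))" "incseq (\<lambda>n. m (r5 n))"
  proof -
    obtain q where q: "strict_mono q" "incseq (\<lambda>n. f (r4 (q n)))" using good_sub[OF gD, of f r4] fD by auto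
    show ?thesis
    proof (rule that[of "\<lambda>n. r4 (q n)"])
      show "strict_mono (\<lambda>n. r4 (q n))" using strict_mono_comp[OF r4(1) q(1)] .
      show "incseq (\<lambda>n. f (r4 (q n)))" using q(2) .
      show "\<forall>g :: nat \<Rightarrow> real. incseq (\<lambda>n. g (r4 n)) \<longrightarrow> incseq (\<lambda>n. g (r4 (q n)))"
        using incseq_comp[OF _ q(1)] by blast
      show "incseq (\<lambda>n. k (r4 (q n)))" using incseq_comp[of k r4 q, OF r4(4) q(1)] .
      show "incseq (\<lambda>n. m (r4 (q n)))" using incseq_comp[of m r4 q, OF r4(2) q(1)] .
    qed
  qed
  have ic: "incseq (\<lambda>n. c (r5 n))"
    using r5(3)[rule_format, OF r4(3)[rule_format, OF r3(3)[rule_format, OF r2(3)[rule_format, OF r1(2)]]]] .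
  have ij: "incseq (\<lambda>n. - j (r5 n))"
    using r5(3)[rule_format, OF r4(3)[rule_format, OF r3(3)[rule_format, OF r2(2)]]] .
  define a where "a = r5 0" define b where "b = r5 1"
  have ab: "a < b" using r5(1) unfolding a_def b_def strict_mono_def by simp
  have "c a \<le> c b" using ic unfolding a_def b_def incseq_def by simp
  moreover have "c a \<noteq> c b" using c(1) ab unfolding inj_def by blast
  ultimately have cab: "c a < c b" by simp
  have jab: "j b \<le> j a" using ij unfolding a_def b_def incseq_def by force
  have kab: "k a \<le> k b" using r5(4) unfolding a_def b_def incseq_def by simp
  have mab: "m a \<le> m b" using r5(5) unfolding a_def b_def incseq_def by simp
  have fab: "f a \<le> f b" using r5(2) unfolding a_def b_def incseq_def by simp
  have j1: "j a \<le> 1" using jJ0[of a] assms(3) by auto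
  have c0: "c a \<ge> 0" using cI[of a] assms(1) by auto
  have eq: "\<And>n. j n * real (m n) = real (m n) - 1 + f n + real (k n) * c n"
  proof -
    fix n
    have "real (m n) > 0" using kmf[of n] by simp
    then show "j n * real (m n) = real (m n) - 1 + f n + real (k n) * c n"
      unfolding j_def by simp
  qed
  show False
    by (rule final_arith[where mx="real (m a)" and my="real (m b)" and kx="real (k a)" and ky="real (k b)" and fx="f a" and fy="f b" and cx="c a" and cy="c b" and jx="j a" and jy="j b"])
       (use kmf mab kab fab c0 cab jab j1 eq in auto)
qed

end
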